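(* Let $a_m=\binom{2m-1}{m}$ for $m\ge1$. For $n\ge1$ let $A_n$ be the $(n+1)\times(n+1)$ matrix whose first row is $(1,4,4^2,\dots,4^n)$ and whose row $i+1$ (for $i=1,\dots,n$) is $(a_i,a_{i+1},\dots,a_{i+n})$, and let $A'_n$ be the $(n+1)\times(n+1)$ matrix whose first row is $(1,4,\dots,4^n)$ and whose row $i+1$ (for $i=1,\dots,n$) is $(a_{i+1},a_{i+2},\dots,a_{i+1+n})$. Then for all $n\ge1$: $\det A_n=(-1)^n$ and $\det A'_n=(-1)^n(n+1)$. *)

theory Defs
  imports Main "Jordan_Normal_Form.Determinant"
begin

definition a_seq :: "nat \<Rightarrow> int" where
  "a_seq m = int ((2*m - 1) choose m)"

definition A_mat :: "nat \<Rightarrow> int mat" where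
  "A_mat n = mat (n+1) (n+1) (\<lambda>(i,j). if i = 0 then 4^j else a_seq (i + j))"

definition A'_mat :: "nat \<Rightarrow> int mat" where
  "A'_mat n = mat (n+1) (n+1) (\<lambda>(i,j). if i = 0 then 4^j else a_seq (i + 1 + j))"

end

theory Submission
  imports Defs
begin

definition dp :: "nat \<Rightarrow> nat \<Rightarrow> int" where
  "dp m h = (if even (m+h) then int (m choose ((m+h) div 2)) - int (m choose ((m+h) div 2 + 1)) else 0)"

lemma dp_0: "dp 0 h = (if h = 0 then 1 else 0)"
  by (auto simp: dp_def)

lemma dp_big: "h > m \<Longrightarrow> dp m h = 0"
proof -
  assume "h > m"
  show ?thesis
  proof (cases "even (m+h)")
    case True
    then have "(m+h) div 2 > m" using \<open>h > m\<close> by presburger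
    then show ?thesis using True by (simp add: dp_def binomial_eq_0)
  qed (simp add: dp_def)
qed

lemma dp_diag: "dp m m = 1"
  by (auto simp: dp_def)

lemma dp_par: "odd (m+h) \<Longrightarrow> dp m h = 0"
  by (auto simp: dp_def)

lemma dp_Suc: "dp (Suc m) h = (case h of 0 \<Rightarrow> 0 | Suc g \<Rightarrow> dp m g) + dp m (Suc h)"
proof (cases "even (Suc m + h)")
  case False
  then show ?thesis by (cases h) (auto simp: dp_def)
next
  case True
  define j where "j = (Suc m + h) div 2"
  have j2: "Suc m + h = 2*j" using True j_def by auto
  show ?thesis
  proof (cases h)
    case 0
    then obtain r where m: "m = 2*r - 1" "r \<ge> 1" using j2 by (intro that[of j]) auto
    have e1: "(m+1) div 2 = r" using m by auto
    have s: "m choose (r-1) = m choose r" using m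
      using binomial_symmetric[of "r-1" m] m by simp
    have p1: "Suc m choose r = (m choose (r-1)) + (m choose r)" using m
      by (metis Suc_diff_1 binomial_Suc_Suc less_eq_Suc_le One_nat_def)
    have p2: "Suc m choose (r+1) = (m choose r) + (m choose (r+1))" by simp
    show ?thesis using 0 True m(2) e1 s p1 p2 by (simp add: dp_def)
  next
    case (Suc g)
    have jj: "j \<ge> 1" using j2 Suc by auto
    have a1: "(m + g) div 2 = j - 1" using j2 Suc by auto
    have a2: "(m + Suc h) div 2 = j" using j2 Suc by auto
    have p1: "Suc m choose j = (m choose (j-1)) + (m choose j)" using jj
      by (metis Suc_diff_1 binomial_Suc_Suc less_eq_Suc_le One_nat_def)
    have p2: "Suc m choose (j+1) = (m choose j) + (m choose (j+1))" by simp
    have ev1: "even (m+g)" "even (m + Suc h)" using j2 Suc by presburger+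
    show ?thesis using Suc ev1 a1 a2 p1 p2 jj True
      by (simp add: dp_def j_def[symmetric])
  qed
qed

lemma dp_conv: "N > m \<Longrightarrow> (\<Sum>h<N. dp m h * dp m' h) = dp (m+m') 0"
proof (induction m arbitrary: m' N)
  case 0
  have "(\<Sum>h<N. dp 0 h * dp m' h) = (\<Sum>h<N. if h = 0 then dp m' h else 0)"
    by (rule sum.cong) (auto simp: dp_0)
  then show ?case using 0 by simp
next
  case (Suc m)
  obtain N1 where N: "N = Suc (Suc N1)" and N1: "N1 \<ge> m" using Suc.prems
    by (metis Suc_le_D Suc_le_eq le_eq_less_or_eq not_less_eq_eq)
  have IH: "(\<Sum>g<Suc N1. dp m g * dp (Suc m') g) = dp (m + Suc m') 0"
    using Suc.IH[of "Suc N1" "Suc m'"] N1 by simp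
  have "(\<Sum>h<N. dp (Suc m) h * dp m' h)
     = (\<Sum>h<N. (case h of 0 \<Rightarrow> 0 | Suc g \<Rightarrow> dp m g) * dp m' h) + (\<Sum>h<N. dp m (Suc h) * dp m' h)"
    by (simp add: dp_Suc distrib_right sum.distrib)
  also have "(\<Sum>h<N. (case h of 0 \<Rightarrow> 0 | Suc g \<Rightarrow> dp m g) * dp m' h) = (\<Sum>g<Suc N1. dp m g * dp m' (Suc g))"
    unfolding N by (subst sum.lessThan_Suc_shift) simp
  also have "(\<Sum>h<N. dp m (Suc h) * dp m' h) = (\<Sum>h<N1. dp m (Suc h) * dp m' h)"
    unfolding N using N1 by (simp add: dp_big)
  also have "\<dots> = (\<Sum>g<Suc N1. (case g of 0 \<Rightarrow> 0 | Suc g' \<Rightarrow> dp m' g') * dp m g)"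
    by (subst sum.lessThan_Suc_shift) (simp add: mult.commute)
  finally show ?case using IH
    by (simp add: dp_Suc[of m'] distrib_left sum.distrib algebra_simps)
qed

lemma odd_sum: fixes f :: "nat \<Rightarrow> int"
  assumes "\<And>h. even h \<Longrightarrow> f h = 0"
  shows "(\<Sum>k<Suc n. if k=0 then 0 else f (2*k-1)) = (\<Sum>h<Suc (2*n). f h)"
proof (induction n)
  case 0
  then show ?case using assms by simp
next
  case (Suc n)
  have "(\<Sum>k<Suc (Suc n). if k=0 then 0 else f (2*k-1)) = (\<Sum>h<Suc (2*n). f h) + f (2*n+1)"
    using Suc by simp
  also have "\<dots> = (\<Sum>h<Suc (2*Suc n). f h)" using assms[of "2*n+2"] by simp
  finally show ?case .
qed

lemma dp_conv_odd:
  assumes "1 \<le> i" "i \<le> n" "odd m"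
  shows "(\<Sum>k<Suc n. if k=0 then 0 else dp (2*i-1) (2*k-1) * dp m (2*k-1)) = dp (2*i-1+m) 0"
proof -
  have "(\<Sum>k<Suc n. if k=0 then 0 else dp (2*i-1) (2*k-1) * dp m (2*k-1)) = (\<Sum>h<Suc (2*n). dp (2*i-1) h * dp m h)"
    by (rule odd_sum) (use assms in \<open>auto simp: dp_par\<close>)
  also have "\<dots> = dp (2*i-1+m) 0" by (rule dp_conv) (use assms in auto)
  finally show ?thesis .
qed

lemma a_diff: assumes "m \<ge> 1" shows "a_seq (m+1) - 4 * a_seq m = - dp (2*m) 0"
proof -
  have e1: "2*(m+1) - 1 = Suc (2*m)" by simp
  have c1: "Suc (2*m) choose (m+1) = (2*m choose m) + (2*m choose (m+1))" by simp
  have c2: "2*m choose m = (2*m-1 choose (m-1)) + (2*m-1 choose m)" using assms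
    by (metis Suc_diff_1 binomial_Suc_Suc less_eq_Suc_le One_nat_def mult_2 add_gr_0 diff_Suc_1 Suc_diff_le le_add1)
  have c3: "2*m-1 choose (m-1) = 2*m-1 choose m"
    using binomial_symmetric[of "m-1" "2*m-1"] assms by simp
  have d: "dp (2*m) 0 = int (2*m choose m) - int (2*m choose (m+1))" by (simp add: dp_def)
  show ?thesis unfolding a_seq_def d e1 using c1 c2 c3 by simp
qed

lemma dp_two: assumes "g \<ge> 1"
  shows "dp (Suc (Suc m)) g = (if g \<ge> 2 then dp m (g-2) else 0) + 2 * dp m g + dp m (g+2)"
proof -
  obtain g1 where g: "g = Suc g1" using assms by (cases g) auto
  show ?thesis unfolding g dp_Suc[of "Suc m"] dp_Suc[of m]
    by (cases g1) (auto simp: dp_Suc)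
qed

lemma mult_entry: "A \<in> carrier_mat n m \<Longrightarrow> B \<in> carrier_mat m p \<Longrightarrow> i < n \<Longrightarrow> j < p
  \<Longrightarrow> (A * B) $$ (i,j) = (\<Sum>k<m. A $$ (i,k) * B $$ (k,j))"
  by (simp add: scalar_prod_def atLeast0LessThan)

lemma det_lt: "A \<in> carrier_mat n n \<Longrightarrow> (\<And>i j. i < j \<Longrightarrow> j < n \<Longrightarrow> A $$ (i,j) = 0)
  \<Longrightarrow> det A = (\<Prod>i<n. A $$ (i,i))"
  by (subst det_lower_triangular[of n]) (auto simp: prod_list_diag_prod atLeast0LessThan)

lemma det_ut: "A \<in> carrier_mat n n \<Longrightarrow> (\<And>i j. j < i \<Longrightarrow> i < n \<Longrightarrow> A $$ (i,j) = 0)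
  \<Longrightarrow> det (A :: 'a :: comm_ring_1 mat) = (\<Prod>i<n. A $$ (i,i))"
  by (subst det_upper_triangular[of _ n]) (auto simp: upper_triangular_def prod_list_diag_prod atLeast0LessThan)

definition Em :: "nat \<Rightarrow> int mat" where
  "Em n = mat (n+1) (n+1) (\<lambda>(k,j). (if k = j then 1 else 0) + (if Suc k = j then -4 else 0))"

definition Pm :: "(nat \<Rightarrow> int) \<Rightarrow> nat \<Rightarrow> int mat" where
  "Pm c n = mat (n+1) (n+1) (\<lambda>(i,k). if i = 0 then (if k = 0 then 1 else 0) else if k = 0 then c i
      else - dp (2*i-1) (2*k-1))"

definition Rm :: "(nat \<Rightarrow> nat) \<Rightarrow> nat \<Rightarrow> int mat" where
  "Rm g n = mat (n+1) (n+1) (\<lambda>(k,j). if k = 0 then (if j = 0 then 1 else 0) else if j = 0 then 0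
      else dp (g j) (2*k-1))"

definition wfn :: "nat \<Rightarrow> nat \<Rightarrow> int" where
  "wfn i l = (if i = 0 \<or> l = 0 then (if i = l then 1 else 0) else
      (if l = i then 2 else 0) + (if Suc l = i then 1 else 0) + (if l = Suc i then 1 else 0))"

definition Wm :: "nat \<Rightarrow> int mat" where
  "Wm n = mat (n+1) (n+1) (\<lambda>(i,l). wfn i l)"

definition Fm :: "nat \<Rightarrow> int mat" where
  "Fm n = mat (n+1) (n+1) (\<lambda>(k,j). if k = 0 then (if j = 0 then 1 else 0) else if j = 0 then 0
      else if k \<le> j then (-1)^(j-k) * int k else 0)"

lemma carr: "Em n \<in> carrier_mat (n+1) (n+1)" "Pm c n \<in> carrier_mat (n+1) (n+1)"
  "Rm g n \<in> carrier_mat (n+1) (n+1)" "Wm n \<in> carrier_mat (n+1) (n+1)" "Fm n \<in> carrier_mat (n+1) (n+1)"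
  "A_mat n \<in> carrier_mat (n+1) (n+1)" "A'_mat n \<in> carrier_mat (n+1) (n+1)"
  by (auto simp: Em_def Pm_def Rm_def Wm_def Fm_def A_mat_def A'_mat_def)

lemma det_Em: "det (Em n) = 1"
  by (subst det_ut[OF carr(1)]) (auto simp: Em_def)

lemma ME_entry: assumes M: "M \<in> carrier_mat (n+1) (n+1)" and i: "i < n+1" and j: "j < n+1"
  shows "(M * Em n) $$ (i,j) = M $$ (i,j) + (if j \<ge> 1 then -4 * M $$ (i,j-1) else 0)"
proof -
  have "(M * Em n) $$ (i,j) = (\<Sum>k<n+1. M $$ (i,k) * Em n $$ (k,j))"
    by (rule mult_entry[OF M carr(1) i j])
  also have "\<dots> = (\<Sum>k<n+1. (if k = j then M $$ (i,k) else 0) + (if Suc k = j then -4 * M $$ (i,k) else 0))"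
    by (rule sum.cong) (use j in \<open>auto simp: Em_def\<close>)
  also have "\<dots> = M $$ (i,j) + (if j \<ge> 1 then -4 * M $$ (i,j-1) else 0)"
  proof (cases j)
    case 0 then show ?thesis using j by (simp add: sum.distrib)
  next
    case (Suc j')
    have "(\<Sum>k<n+1. (if Suc k = j then -4 * M $$ (i,k) else 0)) = (\<Sum>k<n+1. (if k = j' then -4 * M $$ (i,k) else 0))"
      by (rule sum.cong) (auto simp: Suc)
    then show ?thesis using j Suc by (simp add: sum.distrib)
  qed
  finally show ?thesis .
qed

lemma PR: assumes g: "\<And>j. 1 \<le> j \<Longrightarrow> j \<le> n \<Longrightarrow> odd (g j)"
  shows "Pm c n * Rm g n = mat (n+1) (n+1) (\<lambda>(i,j). if i = 0 then (if j = 0 then 1 else 0)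
     else if j = 0 then c i else - dp (2*i-1 + g j) 0)"
proof (rule eq_matI)
  fix i j assume "i < dim_row (mat (n+1) (n+1) (\<lambda>(i,j). if i = 0 then (if j = 0 then 1 else 0)
     else if j = 0 then c i else - dp (2*i-1 + g j) 0))"
     "j < dim_col (mat (n+1) (n+1) (\<lambda>(i,j). if i = 0 then (if j = 0 then 1 else 0)
     else if j = 0 then c i else - dp (2*i-1 + g j) 0))"
  then have i: "i < n+1" and j: "j < n+1" by auto
  have e: "(Pm c n * Rm g n) $$ (i,j) = (\<Sum>k<n+1. Pm c n $$ (i,k) * Rm g n $$ (k,j))"
    by (rule mult_entry[OF carr(2) carr(3) i j])
  show "(Pm c n * Rm g n) $$ (i,j) = mat (n+1) (n+1) (\<lambda>(i,j). if i = 0 then (if j = 0 then 1 else 0)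
     else if j = 0 then c i else - dp (2*i-1 + g j) 0) $$ (i,j)"
  proof (cases "i = 0")
    case True
    have "(\<Sum>k<n+1. Pm c n $$ (i,k) * Rm g n $$ (k,j)) = (\<Sum>k<n+1. if k = 0 then Rm g n $$ (k,j) else 0)"
      by (rule sum.cong) (use True i in \<open>auto simp: Pm_def\<close>)
    then show ?thesis using e True i j by (simp add: Rm_def)
  next
    case False
    show ?thesis
    proof (cases "j = 0")
      case True
      have "(\<Sum>k<n+1. Pm c n $$ (i,k) * Rm g n $$ (k,j)) = (\<Sum>k<n+1. if k = 0 then Pm c n $$ (i,k) else 0)"
        by (rule sum.cong) (use True j in \<open>auto simp: Rm_def\<close>)
      then show ?thesis using e True False i j by (simp add: Pm_def)
    next
      case jF: False
      have "(\<Sum>k<n+1. Pm c n $$ (i,k) * Rm g n $$ (k,j)) =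
          - (\<Sum>k<Suc n. if k=0 then 0 else dp (2*i-1) (2*k-1) * dp (g j) (2*k-1))"
        unfolding sum_negf[symmetric] by (rule sum.cong) (use False jF i j in \<open>auto simp: Rm_def Pm_def\<close>)
      also have "\<dots> = - dp (2*i-1 + g j) 0"
        by (subst dp_conv_odd) (use False jF i j g in auto)
      finally show ?thesis using e False jF i j by simp
    qed
  qed
qed (auto simp: Pm_def Rm_def)

lemma det_Pm: "det (Pm c n) = (-1)^n"
proof -
  have "det (Pm c n) = (\<Prod>i<n+1. Pm c n $$ (i,i))"
    by (rule det_lt[OF carr(2)]) (auto simp: Pm_def dp_big)
  also have "\<dots> = (\<Prod>i<n+1. if i = 0 then 1 else -1)"
    by (rule prod.cong) (auto simp: Pm_def dp_diag)
  also have "\<dots> = (-1)^n" by (induction n) auto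
  finally show ?thesis .
qed

lemma det_Rm: "det (Rm (\<lambda>j. 2*j-1) n) = 1"
proof -
  have "det (Rm (\<lambda>j. 2*j-1) n) = (\<Prod>i<n+1. Rm (\<lambda>j. 2*j-1) n $$ (i,i))"
    by (rule det_ut[OF carr(3)]) (auto simp: Rm_def dp_big)
  also have "\<dots> = 1"
    by (rule prod.neutral) (auto simp: Rm_def dp_diag)
  finally show ?thesis .
qed

lemma wsum: assumes "1 \<le> k" "k \<le> n"
  shows "(\<Sum>l<n+1. wfn k l * x l) = (if k \<ge> 2 then x (k-1) else 0) + 2 * x k + (if k < n then x (k+1) else 0)"
proof -
  have "(\<Sum>l<n+1. wfn k l * x l) = (\<Sum>l<n+1. (if l = k then 2 * x l else 0) + (if l = k - 1 \<and> k \<ge> 2 then x l else 0)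
      + (if l = k + 1 then x l else 0))"
    by (rule sum.cong) (use assms in \<open>auto simp: wfn_def\<close>)
  also have "\<dots> = (\<Sum>l<n+1. (if l = k then 2 * x l else 0)) + (\<Sum>l<n+1. if l = k - 1 \<and> k \<ge> 2 then x l else 0)
      + (\<Sum>l<n+1. if l = k + 1 then x l else 0)" by (simp add: sum.distrib)
  also have "(\<Sum>l<n+1. (if l = k then 2 * x l else 0)) = 2 * x k" using assms by simp
  also have "(\<Sum>l<n+1. if l = k - 1 \<and> k \<ge> 2 then x l else 0) = (if k \<ge> 2 then x (k-1) else 0)"
    using assms by (cases "k \<ge> 2") simp_all
  also have "(\<Sum>l<n+1. if l = k + 1 then x l else 0) = (if k < n then x (k+1) else 0)"
    using assms by simp
  finally show ?thesis by (simp add: algebra_simps)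
qed

lemma WR: "Wm n * Rm (\<lambda>j. 2*j-1) n = Rm (\<lambda>j. 2*j+1) n"
proof (rule eq_matI)
  fix k j assume "k < dim_row (Rm (\<lambda>j. 2*j+1) n)" "j < dim_col (Rm (\<lambda>j. 2*j+1) n)"
  then have k: "k < n+1" and j: "j < n+1" by (auto simp: Rm_def)
  have e: "(Wm n * Rm (\<lambda>j. 2*j-1) n) $$ (k,j) = (\<Sum>l<n+1. wfn k l * Rm (\<lambda>j. 2*j-1) n $$ (l,j))"
    by (subst mult_entry[OF carr(4) carr(3) k j]) (use k in \<open>simp add: Wm_def\<close>)
  show "(Wm n * Rm (\<lambda>j. 2*j-1) n) $$ (k,j) = Rm (\<lambda>j. 2*j+1) n $$ (k,j)"
  proof (cases "k = 0")
    case True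
    have "(\<Sum>l<n+1. wfn k l * Rm (\<lambda>j. 2*j-1) n $$ (l,j)) = (\<Sum>l<n+1. if l = 0 then Rm (\<lambda>j. 2*j-1) n $$ (l,j) else 0)"
      by (rule sum.cong) (auto simp: wfn_def True)
    then show ?thesis using e True j by (simp add: Rm_def)
  next
    case False
    have ws: "(\<Sum>l<n+1. wfn k l * Rm (\<lambda>j. 2*j-1) n $$ (l,j)) =
       (if k \<ge> 2 then Rm (\<lambda>j. 2*j-1) n $$ (k-1,j) else 0) + 2 * Rm (\<lambda>j. 2*j-1) n $$ (k,j)
       + (if k < n then Rm (\<lambda>j. 2*j-1) n $$ (k+1,j) else 0)"
      by (rule wsum) (use False k in auto)
    show ?thesis
    proof (cases "j = 0")
      case True then show ?thesis using e ws False k j by (simp add: Rm_def)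
    next
      case jF: False
      have t: "dp (Suc (Suc (2*j-1))) (2*k-1) = (if 2*k-1 \<ge> 2 then dp (2*j-1) (2*k-1-2) else 0) + 2 * dp (2*j-1) (2*k-1) + dp (2*j-1) (2*k-1+2)"
        by (rule dp_two) (use False in auto)
      have t2: "Suc (Suc (2*j-1)) = 2*j+1" using jF by auto
      have t3: "\<not> k < n \<Longrightarrow> dp (2*j-1) (2*k-1+2) = 0" using k j by (intro dp_big) auto
      have t4: "2*(k-1) - 1 = 2*k-1-2" "2*(k+1) - 1 = 2*k-1+2" "(2 \<le> 2*k-1) = (2 \<le> k)" using False by auto
      have r1: "k \<ge> 2 \<Longrightarrow> Rm (\<lambda>j. 2*j-1) n $$ (k-1,j) = dp (2*j-1) (2*k-1-2)"
        using k j jF by (simp add: Rm_def) (rule arg_cong, arith)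
      have r2: "Rm (\<lambda>j. 2*j-1) n $$ (k,j) = dp (2*j-1) (2*k-1)"
        using k j jF False by (simp add: Rm_def)
      have r3: "k < n \<Longrightarrow> Rm (\<lambda>j. 2*j-1) n $$ (k+1,j) = dp (2*j-1) (2*k-1+2)"
        using k j jF False by (simp add: Rm_def)
      have r4: "Rm (\<lambda>j. 2*j+1) n $$ (k,j) = dp (2*j+1) (2*k-1)"
        using k j jF False by (simp add: Rm_def)
      have "(Wm n * Rm (\<lambda>j. 2*j-1) n) $$ (k,j) = (if k \<ge> 2 then dp (2*j-1) (2*k-1-2) else 0) + 2 * dp (2*j-1) (2*k-1)
         + dp (2*j-1) (2*k-1+2)"
        unfolding e ws r2 using r1 r3 t3 by auto
      also have "\<dots> = Rm (\<lambda>j. 2*j+1) n $$ (k,j)" unfolding r4 t[unfolded t2] using t4(3) by simp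
      finally show ?thesis .
    qed
  qed
qed (auto simp: Rm_def Wm_def)

lemma WF_sum: assumes i: "i < n+1" and j: "j < n+1"
  shows "(Wm n * Fm n) $$ (i,j) = (\<Sum>l<n+1. wfn i l * Fm n $$ (l,j))"
  by (subst mult_entry[OF carr(4) carr(5) i j]) (use i in \<open>simp add: Wm_def\<close>)

lemma WF_up: assumes ij: "i < j" and j: "j \<le> n" shows "(Wm n * Fm n) $$ (i,j) = 0"
proof (cases "i = 0")
  case True
  have "(\<Sum>l<n+1. wfn i l * Fm n $$ (l,j)) = (\<Sum>l<n+1. if l = 0 then Fm n $$ (l,j) else 0)"
    by (rule sum.cong) (auto simp: wfn_def True)
  then show ?thesis using WF_sum[of i n j] True ij j by (simp add: Fm_def)
next
  case False
  define d where "d = j - i - 1"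
  have d: "j = i + Suc d" using ij by (simp add: d_def)
  have i1: "i < n+1" using ij j by simp
  have j1: "j < n+1" using j by simp
  have s: "(Wm n * Fm n) $$ (i,j) = (if i \<ge> 2 then Fm n $$ (i-1,j) else 0) + 2 * Fm n $$ (i,j)
       + (if i < n then Fm n $$ (i+1,j) else 0)"
  proof -
    have "(Wm n * Fm n) $$ (i,j) = (\<Sum>l<n+1. wfn i l * Fm n $$ (l,j))" by (rule WF_sum[OF i1 j1])
    also have "\<dots> = (if i \<ge> 2 then Fm n $$ (i-1,j) else 0) + 2 * Fm n $$ (i,j)
       + (if i < n then Fm n $$ (i+1,j) else 0)" by (rule wsum) (use False i1 in auto)
    finally show ?thesis .
  qed
  have f1: "i \<ge> 2 \<Longrightarrow> Fm n $$ (i-1,j) = (-1)^(Suc (Suc d)) * (int i - 1)"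
  proof -
    assume "i \<ge> 2"
    then have "j - (i-1) = Suc (Suc d)" "int (i - 1) = int i - 1" using d by auto
    then show ?thesis using \<open>i \<ge> 2\<close> d j by (simp add: Fm_def)
  qed
  have f2: "Fm n $$ (i,j) = (-1)^(Suc d) * int i"
    using False d j by (simp add: Fm_def)
  have f3: "Fm n $$ (i+1,j) = (-1)^d * (int i + 1)"
  proof -
    have "j - (i+1) = d" using d by auto
    then show ?thesis using False d j by (simp add: Fm_def)
  qed
  have iln: "i < n" using ij j by auto
  show ?thesis
  proof (cases "i \<ge> 2")
    case True
    show ?thesis unfolding s using True iln f1 f2 f3 by (simp add: algebra_simps)
  next
    case F2: False
    then have "i = 1" using False by auto
    then show ?thesis unfolding s using iln f2 f3 by simp
  qed
qed

lemma WF_diag: assumes i: "i \<le> n" shows "(Wm n * Fm n) $$ (i,i) = (if i = 0 then 1 else int i + 1)"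
proof (cases "i = 0")
  case True
  have "(\<Sum>l<n+1. wfn i l * Fm n $$ (l,i)) = (\<Sum>l<n+1. if l = 0 then Fm n $$ (l,i) else 0)"
    by (rule sum.cong) (auto simp: wfn_def True)
  then show ?thesis using WF_sum[of i n i] True i by (simp add: Fm_def)
next
  case False
  have s: "(Wm n * Fm n) $$ (i,i) = (if i \<ge> 2 then Fm n $$ (i-1,i) else 0) + 2 * Fm n $$ (i,i)
       + (if i < n then Fm n $$ (i+1,i) else 0)"
    using WF_sum[of i n i] wsum[of i n "\<lambda>l. Fm n $$ (l,i)"] False i by simp
  have f1: "i \<ge> 2 \<Longrightarrow> Fm n $$ (i-1,i) = - (int i - 1)"
  proof -
    assume "i \<ge> 2"
    then have "i - (i-1) = 1" "int (i - 1) = int i - 1" by auto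
    then show ?thesis using \<open>i \<ge> 2\<close> i by (simp add: Fm_def)
  qed
  have f2: "Fm n $$ (i,i) = int i" using False i by (simp add: Fm_def)
  have f3: "i < n \<Longrightarrow> Fm n $$ (i+1,i) = 0" using i by (simp add: Fm_def)
  show ?thesis
  proof (cases "i \<ge> 2")
    case True
    show ?thesis unfolding s using True False f1 f2 f3 by simp
  next
    case F2: False
    then have "i = 1" using False by auto
    then show ?thesis unfolding s using f2 f3 by simp
  qed
qed

lemma det_Wm: "det (Wm n) = int n + 1"
proof -
  have "det (Wm n * Fm n) = (\<Prod>i<n+1. (Wm n * Fm n) $$ (i,i))"
    by (rule det_lt) (use mult_carrier_mat[OF carr(4) carr(5)] WF_up in auto)
  also have "\<dots> = (\<Prod>i<n+1. if i = 0 then 1 else int i + 1)"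
    by (rule prod.cong) (auto simp: WF_diag)
  also have "\<dots> = int (fact (Suc n))" by (induction n) (auto simp: algebra_simps)
  finally have a: "det (Wm n * Fm n) = int (fact (Suc n))" .
  have "det (Fm n) = (\<Prod>i<n+1. Fm n $$ (i,i))"
    by (rule det_ut[OF carr(5)]) (auto simp: Fm_def)
  also have "\<dots> = (\<Prod>i<n+1. if i = 0 then 1 else int i)"
    by (rule prod.cong) (auto simp: Fm_def)
  also have "\<dots> = int (fact n)" by (induction n) (auto simp: algebra_simps)
  finally have b: "det (Fm n) = int (fact n)" .
  have "det (Wm n) * int (fact n) = (int n + 1) * int (fact n)"
    using a b det_mult[OF carr(4) carr(5)] by (simp add: algebra_simps)
  then show ?thesis by simp
qed

lemma AE: "A_mat n * Em n = Pm a_seq n * Rm (\<lambda>j. 2*j-1) n"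
proof -
  have PRe: "Pm a_seq n * Rm (\<lambda>j. 2*j-1) n = mat (n+1) (n+1) (\<lambda>(i,j). if i = 0 then (if j = 0 then 1 else 0)
     else if j = 0 then a_seq i else - dp (2*i-1 + (2*j-1)) 0)"
    by (rule PR) auto
  show ?thesis unfolding PRe
  proof (rule eq_matI)
    fix i j assume "i < dim_row (mat (n+1) (n+1) (\<lambda>(i,j). if i = 0 then (if j = 0 then 1 else 0)
     else if j = 0 then a_seq i else - dp (2*i-1 + (2*j-1)) 0))" "j < dim_col (mat (n+1) (n+1) (\<lambda>(i,j). if i = 0 then (if j = 0 then 1 else 0)
     else if j = 0 then a_seq i else - dp (2*i-1 + (2*j-1)) 0))"
    then have i: "i < n+1" and j: "j < n+1" by auto
    have me: "(A_mat n * Em n) $$ (i,j) = A_mat n $$ (i,j) + (if j \<ge> 1 then -4 * A_mat n $$ (i,j-1) else 0)"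
      by (rule ME_entry[OF carr(6) i j])
    show "(A_mat n * Em n) $$ (i,j) = mat (n+1) (n+1) (\<lambda>(i,j). if i = 0 then (if j = 0 then 1 else 0)
     else if j = 0 then a_seq i else - dp (2*i-1 + (2*j-1)) 0) $$ (i,j)"
    proof (cases "i = 0")
      case True
      then show ?thesis using me i j
        by (cases j) (auto simp: A_mat_def)
    next
      case False
      show ?thesis
      proof (cases "j = 0")
        case True then show ?thesis using me i j False by (simp add: A_mat_def)
      next
        case jF: False
        have ad: "a_seq ((i+j-1)+1) - 4 * a_seq (i+j-1) = - dp (2*(i+j-1)) 0"
          by (rule a_diff) (use False jF in auto)
        have e1: "(i+j-1)+1 = i + j" "2*(i+j-1) = 2*i-1 + (2*j-1)" "i + (j-1) = i+j-1"
          using False jF by auto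
        have jp: "0 < j" using jF by simp
        have lhs: "(A_mat n * Em n) $$ (i,j) = a_seq (i+j) - 4 * a_seq (i+j-1)"
          using me i j False jp e1(3) by (simp add: A_mat_def)
        have rhs: "mat (n+1) (n+1) (\<lambda>(i,j). if i = 0 then (if j = 0 then 1 else 0)
           else if j = 0 then a_seq i else - dp (2*i-1 + (2*j-1)) 0) $$ (i,j) = - dp (2*i-1 + (2*j-1)) 0"
          using i j False jF by simp
        show ?thesis unfolding lhs rhs using ad e1 by simp
      qed
    qed
  qed (auto simp: A_mat_def A'_mat_def Em_def)
qed

lemma A'E: "A'_mat n * Em n = Pm (\<lambda>i. a_seq (i+1)) n * Rm (\<lambda>j. 2*j+1) n"
proof -
  have PRe: "Pm (\<lambda>i. a_seq (i+1)) n * Rm (\<lambda>j. 2*j+1) n = mat (n+1) (n+1) (\<lambda>(i,j). if i = 0 then (if j = 0 then 1 else 0)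
     else if j = 0 then a_seq (i+1) else - dp (2*i-1 + (2*j+1)) 0)"
    by (rule PR) auto
  show ?thesis unfolding PRe
  proof (rule eq_matI)
    fix i j assume "i < dim_row (mat (n+1) (n+1) (\<lambda>(i,j). if i = 0 then (if j = 0 then 1 else 0)
     else if j = 0 then a_seq (i+1) else - dp (2*i-1 + (2*j+1)) 0))" "j < dim_col (mat (n+1) (n+1) (\<lambda>(i,j). if i = 0 then (if j = 0 then 1 else 0)
     else if j = 0 then a_seq (i+1) else - dp (2*i-1 + (2*j+1)) 0))"
    then have i: "i < n+1" and j: "j < n+1" by auto
    have me: "(A'_mat n * Em n) $$ (i,j) = A'_mat n $$ (i,j) + (if j \<ge> 1 then -4 * A'_mat n $$ (i,j-1) else 0)"
      by (rule ME_entry[OF carr(7) i j])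
    show "(A'_mat n * Em n) $$ (i,j) = mat (n+1) (n+1) (\<lambda>(i,j). if i = 0 then (if j = 0 then 1 else 0)
     else if j = 0 then a_seq (i+1) else - dp (2*i-1 + (2*j+1)) 0) $$ (i,j)"
    proof (cases "i = 0")
      case True
      then show ?thesis using me i j
        by (cases j) (auto simp: A'_mat_def)
    next
      case False
      show ?thesis
      proof (cases "j = 0")
        case True then show ?thesis using me i j False by (simp add: A'_mat_def)
      next
        case jF: False
        have ad: "a_seq ((i+j)+1) - 4 * a_seq (i+j) = - dp (2*(i+j)) 0"
          by (rule a_diff) (use False in auto)
        have e1: "2*(i+j) = 2*i-1 + (2*j+1)" "i + 1 + (j-1) = i+j" "i + 1 + j = i + j + 1"
          using False jF by auto
        show ?thesis using me i j False jF ad e1 by (simp add: A'_mat_def)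
      qed
    qed
  qed (auto simp: A_mat_def A'_mat_def Em_def)
qed

theorem lemma8p1:
  fixes n :: nat
  assumes "n \<ge> 1"
  shows "det (A_mat n) = (-1)^n \<and> det (A'_mat n) = (-1)^n * int (n+1)"
proof
  have "det (A_mat n) = det (A_mat n * Em n)"
    using det_mult[OF carr(6) carr(1)] det_Em by simp
  also have "\<dots> = det (Pm a_seq n) * det (Rm (\<lambda>j. 2*j-1) n)"
    unfolding AE by (rule det_mult[OF carr(2) carr(3)])
  finally show "det (A_mat n) = (-1)^n" using det_Pm det_Rm by simp
next
  have "det (A'_mat n) = det (A'_mat n * Em n)"
    using det_mult[OF carr(7) carr(1)] det_Em by simp
  also have "\<dots> = det (Pm (\<lambda>i. a_seq (i+1)) n * (Wm n * Rm (\<lambda>j. 2*j-1) n))"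
    unfolding A'E WR ..
  also have "\<dots> = det (Pm (\<lambda>i. a_seq (i+1)) n) * (det (Wm n) * det (Rm (\<lambda>j. 2*j-1) n))"
    by (simp add: det_mult[OF carr(2) mult_carrier_mat[OF carr(4) carr(3)]] det_mult[OF carr(4) carr(3)])
  finally show "det (A'_mat n) = (-1)^n * int (n+1)" using det_Pm det_Rm det_Wm by simp
qed

end
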